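(* Suppose $d_i-a_i<2t_i$ for every job $i$. Then for any set $S$ of jobs there is at most one order in which all jobs of $S$ can be executed nonpreemptively, each job $i$ processed without interruption during an interval $[s_i,s_i+t_i)$ with $a_i\le s_i\le d_i-t_i$, with the intervals pairwise disjoint. In particular, the ordering of the executed jobs in any nonpreemptive schedule is uniquely determined by the set of executed jobs.
   Context: Jobs $1,\dots,n$ have nonnegative integer processing times $t_i$, arrival times $a_i$ and deadlines $d_i$; they are executed on a single processor that processes one job at a time. *)

theory Defs
  imports Complex_Main
begin

definition feasible_np ::
  "(nat \<Rightarrow> nat) \<Rightarrow> (nat \<Rightarrow> nat) \<Rightarrow> (nat \<Rightarrow> nat) \<Rightarrow> nat set \<Rightarrow> (nat \<Rightarrow> real) \<Rightarrow> bool" where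
  "feasible_np t a d S s \<longleftrightarrow>
     (\<forall>i\<in>S. real (a i) \<le> s i \<and> s i \<le> real (d i) - real (t i)) \<and>
     (\<forall>i\<in>S. \<forall>j\<in>S. i \<noteq> j \<longrightarrow>
        {s i..<s i + real (t i)} \<inter> {s j..<s j + real (t j)} = {})"

definition executable_order ::
  "(nat \<Rightarrow> nat) \<Rightarrow> (nat \<Rightarrow> nat) \<Rightarrow> (nat \<Rightarrow> nat) \<Rightarrow> nat set \<Rightarrow> nat list \<Rightarrow> bool" where
  "executable_order t a d S xs \<longleftrightarrow>
     distinct xs \<and> set xs = S \<and>
     (\<exists>s. feasible_np t a d S s \<and> sorted_wrt (\<lambda>i j. s i < s j) xs)"

end

theory Submission
  imports Defs
begin

lemma tpos:
  assumes "\<forall>i\<in>{1..n}. real (d i) - real (a i) < 2 * real (t i)"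
    and "S \<subseteq> {1..n}" and "feasible_np t a d S s" and "i \<in> S"
  shows "real (t i) > 0"
proof -
  have "real (a i) \<le> s i" "s i \<le> real (d i) - real (t i)"
    using assms(3,4) unfolding feasible_np_def by auto
  moreover have "real (d i) - real (a i) < 2 * real (t i)" using assms(1,2,4) by auto
  ultimately show ?thesis by linarith
qed

lemma before:
  assumes "feasible_np t a d S s" "i \<in> S" "j \<in> S" "i \<noteq> j" "s i < s j"
    "real (t i) > 0" "real (t j) > 0"
  shows "s i + real (t i) \<le> s j"
proof (rule ccontr)
  assume "\<not> ?thesis"
  then have "s j \<in> {s i..<s i + real (t i)} \<inter> {s j..<s j + real (t j)}"
    using assms by auto
  thus False using assms(1-4) unfolding feasible_np_def by blast
qed

lemma key:
  assumes A: "\<forall>i\<in>{1..n}. real (d i) - real (a i) < 2 * real (t i)"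
    and B: "S \<subseteq> {1..n}" and F: "feasible_np t a d S s" and F': "feasible_np t a d S s'"
    and "i \<in> S" "j \<in> S" "s i < s j"
  shows "s' i < s' j"
proof -
  have ij: "i \<noteq> j" using assms by auto
  have ti: "real (t i) > 0" and tj: "real (t j) > 0"
    using tpos[OF A B F] assms by auto
  have 1: "s i + real (t i) \<le> s j" using before[OF F _ _ ij] assms ti tj by auto
  show ?thesis
  proof (rule ccontr)
    assume "\<not> ?thesis"
    moreover have "s' i \<noteq> s' j"
    proof
      assume "s' i = s' j"
      then have "s' i \<in> {s' i..<s' i + real (t i)} \<inter> {s' j..<s' j + real (t j)}"
        using ti tj by auto
      thus False using F' ij assms unfolding feasible_np_def by blast
    qed
    ultimately have "s' j < s' i" by auto
    then have 2: "s' j + real (t j) \<le> s' i" using before[OF F' _ _ _ _ tj ti] ij assms by auto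
    have b: "real (a i) \<le> s i" "s j \<le> real (d j) - real (t j)"
      "real (a j) \<le> s' j" "s' i \<le> real (d i) - real (t i)"
      using F F' assms unfolding feasible_np_def by auto
    have "real (d i) - real (a i) < 2 * real (t i)" "real (d j) - real (a j) < 2 * real (t j)"
      using A B assms by auto
    thus False using 1 2 b by linarith
  qed
qed

theorem corollary1:
  fixes n :: nat and t a d :: "nat \<Rightarrow> nat" and S :: "nat set"
  assumes "\<forall>i\<in>{1..n}. real (d i) - real (a i) < 2 * real (t i)"
    and "S \<subseteq> {1..n}"
    and "executable_order t a d S xs"
    and "executable_order t a d S ys"
  shows "xs = ys"
proof -
  obtain s where s: "feasible_np t a d S s" "sorted_wrt (\<lambda>i j. s i < s j) xs"
    and dx: "distinct xs" "set xs = S"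
    using assms(3) unfolding executable_order_def by blast
  obtain s' where s': "feasible_np t a d S s'" "sorted_wrt (\<lambda>i j. s' i < s' j) ys"
    and dy: "distinct ys" "set ys = S"
    using assms(4) unfolding executable_order_def by blast
  have "sorted_wrt (\<lambda>i j. s' i < s' j) xs"
    using s(2) dx(2) key[OF assms(1,2) s(1) s'(1)]
    by (auto intro: sorted_wrt_mono_rel[of xs "\<lambda>i j. s i < s j"])
  then have sx: "sorted_wrt (<) (map s' xs)" by (simp add: sorted_wrt_map)
  have sy: "sorted_wrt (<) (map s' ys)" using s'(2) by (simp add: sorted_wrt_map)
  have "map s' xs = map s' ys"
    using sx sy dx dy by (intro sorted_distinct_set_unique)
      (auto simp: strict_sorted_iff)
  moreover have "inj_on s' S"
  proof (rule inj_onI)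
    fix i j assume ij: "i \<in> S" "j \<in> S" "s' i = s' j"
    show "i = j"
    proof (rule ccontr)
      assume ne: "i \<noteq> j"
      have "real (t i) > 0" using tpos[OF assms(1,2) s'(1)] ij by auto
      then have "s' i \<in> {s' i..<s' i + real (t i)} \<inter> {s' j..<s' j + real (t j)}"
        using ij tpos[OF assms(1,2) s'(1)] by auto
      thus False using s'(1) ij ne unfolding feasible_np_def by blast
    qed
  qed
  ultimately show ?thesis using dx dy
    by (metis map_inj_on sup.idem)
qed

end
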